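(* Let $(\lambda_k),(x_k),(y_k)$ be generated by the acceleration framework (context) up to $K$ for convex differentiable $g$ with minimizer $x^*$, $g^*=g(x^* )$, and suppose $\delta\le c\sqrt{1-\sigma}\,\|x^*\|/A_K$ for some $c\ge0$. Then $\delta_k\le c(1+3c)\|x^*\|^2$ for all $k\in[K]$, where $\delta_k=\delta\sum_{i\in[k]}a_i\|x_i-x^*\|+\frac{\delta^2}{2(1-\sigma)}\sum_{i\in[k]}a_i^2$. Consequently, if $c\le\frac14$ then for all $k\in[K]$, \[ A_k[g(y_k)-g^*]+\frac12\|x_k-x^*\|^2+\sum_{i\in[k]}\frac{(1-\sigma)A_i}{2\lambda_i}\|y_i-\tilde x_{i-1}\|^2\le\|x^*\|^2. \] In particular, if $\delta\le\frac{\|x^*\|}{\mu A_K}$ with $\mu=\frac{4\sqrt2}{\sqrt{1-\sigma}}$, then $\|x_k-x^*\|\le2\|x^*\|$ for all $k\in[K]$, and for every $\epsilon>0$ either $g(y_k)\le g^*+\epsilon$ or $A_k\le\|x^*\|^2/\epsilon$.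
   Context: Acceleration framework: let $g:\mathbb{R}^d\to\mathbb{R}$ be convex and differentiable, $\sigma\in(0,1)$, $\delta\ge0$, $K\ge1$. Sequences $(\lambda_k)_{k=1}^K\subset(0,\infty)$ and $(x_k)_{k=0}^K,(y_k)_{k=0}^K\subset\mathbb{R}^d$ are generated by the framework if $x_0=y_0=0$, $A_0=0$, and for each $k=0,\dots,K-1$, with $a_{k+1}=\frac12\big[\lambda_{k+1}+\sqrt{\lambda_{k+1}^2+4\lambda_{k+1}A_k}\big]$, $A_{k+1}=A_k+a_{k+1}$, $\tilde x_k=\frac{A_k}{A_{k+1}}y_k+\frac{a_{k+1}}{A_{k+1}}x_k$, one has $\|\lambda_{k+1}\nabla g(y_{k+1})+y_{k+1}-\tilde x_k\|\le\sigma\|y_{k+1}-\tilde x_k\|+\lambda_{k+1}\delta$ and $\|x_{k+1}-(x_k-a_{k+1}\nabla g(y_{k+1}))\|\le a_{k+1}\delta$. (Note $\lambda_{k+1}A_{k+1}=a_{k+1}^2$.) *)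

theory Defs
  imports "HOL-Analysis.Analysis"
begin

fun acc_A :: "(nat \<Rightarrow> real) \<Rightarrow> nat \<Rightarrow> real" where
  "acc_A lam 0 = 0"
| "acc_A lam (Suc k) = acc_A lam k
     + (lam (Suc k) + sqrt ((lam (Suc k))\<^sup>2 + 4 * lam (Suc k) * acc_A lam k)) / 2"

text \<open>a_k for k >= 1 (so that A_k = A_(k-1) + a_k); the value at k = 0 is irrelevant.\<close>
definition acc_a :: "(nat \<Rightarrow> real) \<Rightarrow> nat \<Rightarrow> real" where
  "acc_a lam k = (lam k + sqrt ((lam k)\<^sup>2 + 4 * lam k * acc_A lam (k - 1))) / 2"

definition acc_xt :: "(nat \<Rightarrow> real) \<Rightarrow> (nat \<Rightarrow> 'a::real_vector) \<Rightarrow> (nat \<Rightarrow> 'a) \<Rightarrow> nat \<Rightarrow> 'a" where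
  "acc_xt lam x y k = (acc_A lam k / acc_A lam (Suc k)) *\<^sub>R y k
                     + (acc_a lam (Suc k) / acc_A lam (Suc k)) *\<^sub>R x k"

definition accel_framework ::
  "('a::real_inner \<Rightarrow> 'a) \<Rightarrow> real \<Rightarrow> real \<Rightarrow> nat \<Rightarrow> (nat \<Rightarrow> real) \<Rightarrow> (nat \<Rightarrow> 'a) \<Rightarrow> (nat \<Rightarrow> 'a) \<Rightarrow> bool"
where
  "accel_framework gradg \<sigma> \<delta> K lam x y \<longleftrightarrow>
     x 0 = 0 \<and> y 0 = 0 \<and> (\<forall>k\<in>{1..K}. 0 < lam k) \<and>
     (\<forall>k<K.
        norm (lam (Suc k) *\<^sub>R gradg (y (Suc k)) + y (Suc k) - acc_xt lam x y k)
          \<le> \<sigma> * norm (y (Suc k) - acc_xt lam x y k) + lam (Suc k) * \<delta>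
      \<and> norm (x (Suc k) - (x k - acc_a lam (Suc k) *\<^sub>R gradg (y (Suc k))))
          \<le> acc_a lam (Suc k) * \<delta>)"

definition acc_err ::
  "real \<Rightarrow> real \<Rightarrow> (nat \<Rightarrow> real) \<Rightarrow> (nat \<Rightarrow> 'a::real_normed_vector) \<Rightarrow> 'a \<Rightarrow> nat \<Rightarrow> real"
where
  "acc_err \<sigma> \<delta> lam x xs k =
     \<delta> * (\<Sum>i=1..k. acc_a lam i * norm (x i - xs))
     + \<delta>\<^sup>2 / (2 * (1 - \<sigma>)) * (\<Sum>i=1..k. (acc_a lam i)\<^sup>2)"

end

theory Submission
  imports Defs
begin

lemma tangent:
  fixes g :: "'a::real_inner \<Rightarrow> real"
  assumes conv: "convex_on UNIV g" and grad: "(g has_derivative (\<lambda>h. G \<bullet> h)) (at z)"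
  shows "g w \<ge> g z + G \<bullet> (w - z)"
proof -
  define h where "h t = g (z + t *\<^sub>R (w - z))" for t::real
  have hc: "convex_on UNIV h"
  proof (rule convex_onI)
    fix t a b :: real assume t: "0 < t" "t < 1"
    have "z + ((1 - t) *\<^sub>R a + t *\<^sub>R b) *\<^sub>R (w - z) = (1 - t) *\<^sub>R (z + a *\<^sub>R (w - z)) + t *\<^sub>R (z + b *\<^sub>R (w - z))"
      by (simp add: algebra_simps)
    then show "h ((1 - t) *\<^sub>R a + t *\<^sub>R b) \<le> (1 - t) * h a + t * h b"
      unfolding h_def using convex_onD[OF conv, of t] t by simp
  qed simp
  have d1: "((\<lambda>t. z + t *\<^sub>R (w - z)) has_derivative (\<lambda>t. t *\<^sub>R (w - z))) (at 0)"
    by (auto intro!: derivative_eq_intros)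
  have grad0: "(g has_derivative (\<lambda>h. G \<bullet> h)) (at (z + 0 *\<^sub>R (w - z)))" using grad by simp
  have "(h has_derivative (\<lambda>t. G \<bullet> (t *\<^sub>R (w - z)))) (at 0)"
    unfolding h_def[abs_def] using diff_chain_at[OF d1 grad0] by (simp add: o_def)
  then have "(h has_derivative (\<lambda>t. (G \<bullet> (w - z)) * t)) (at 0)"
    by (simp add: mult.commute)
  then have hd: "(h has_field_derivative (G \<bullet> (w - z))) (at 0 within UNIV)"
    by (simp add: has_field_derivative_def)
  have "h 1 - h 0 \<ge> (G \<bullet> (w - z)) * (1 - 0)"
    by (rule convex_on_imp_above_tangent[OF hc _ _ _ hd]) auto
  then show ?thesis unfolding h_def by simp
qed

lemma step:
  fixes x y x' y' v xs xt :: "'a::real_inner"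
  assumes A: "0 \<le> A" and lam: "0 < lam" and a: "0 < a" and aa: "a^2 = lam*(A+a)"
    and sg: "0<\<sigma>" "\<sigma><1" and dl: "0\<le>\<delta>"
    and xt: "xt = (A/(A+a)) *\<^sub>R y + (a/(A+a)) *\<^sub>R x"
    and c1: "gy \<ge> gy' + v \<bullet> (y - y')" and c2: "gs \<ge> gy' + v \<bullet> (xs - y')"
    and e1: "norm (lam *\<^sub>R v + y' - xt) \<le> \<sigma> * norm (y' - xt) + lam*\<delta>"
    and e2: "norm (x' - (x - a *\<^sub>R v)) \<le> a*\<delta>"
  shows "(A+a)*(gy' - gs) + 1/2*(norm (x'-xs))^2 + (1-\<sigma>)*(A+a)/(2*lam)*(norm(y'-xt))^2
     \<le> A*(gy - gs) + 1/2*(norm(x-xs))^2 + \<delta>*(a*norm(x'-xs)) + \<delta>^2/(2*(1-\<sigma>))*a^2"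
proof -
  define A' where "A' = A + a"
  have A'p: "A' > 0" using A a A'_def by simp
  have xtA: "A' *\<^sub>R xt = A *\<^sub>R y + a *\<^sub>R x" using A'p unfolding xt A'_def[symmetric]
    by (simp add: scaleR_add_right)
  have vxt: "A' * (v \<bullet> xt) = A * (v \<bullet> y) + a * (v \<bullet> x)"
  proof -
    have "v \<bullet> (A' *\<^sub>R xt) = v \<bullet> (A *\<^sub>R y + a *\<^sub>R x)" using xtA by simp
    then show ?thesis by (simp add: inner_add_right)
  qed
  have c1': "A*gy \<ge> A*gy' + A*(v \<bullet> y) - A*(v\<bullet>y')"
    using mult_left_mono[OF c1 A] by (simp add: inner_diff_right algebra_simps)
  have c2': "a*gs \<ge> a*gy' + a*(v \<bullet> xs) - a*(v\<bullet>y')"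
    using mult_left_mono[OF c2, of a] a by (simp add: inner_diff_right algebra_simps)
  have h1: "A'*(gy'-gs) \<le> A*(gy-gs) + A'*(v\<bullet>(y'-xt)) + a*(v\<bullet>(x-xs))"
    using c1' c2' vxt unfolding A'_def by (simp add: inner_diff_right algebra_simps)
  define w where "w = x' - (x - a *\<^sub>R v)"
  have x'eq: "x' = x - a *\<^sub>R v + w" unfolding w_def by simp
  have ident: "a*(v\<bullet>(x-xs)) + 1/2*(norm (x'-xs))^2 - 1/2*(norm(x-xs))^2
      = w \<bullet> (x'-xs) + 1/2*a^2*(norm v)^2 - 1/2*(norm w)^2"
    unfolding x'eq power2_norm_eq_inner
    by (simp add: inner_add_left inner_add_right inner_diff_left inner_diff_right inner_commute algebra_simps power2_eq_square)
  have "w \<bullet> (x'-xs) \<le> norm w * norm (x'-xs)" by (rule norm_cauchy_schwarz)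
  also have "\<dots> \<le> a*\<delta>*norm(x'-xs)" using e2 unfolding w_def by (simp add: mult_right_mono)
  finally have h2: "a*(v\<bullet>(x-xs)) + 1/2*(norm (x'-xs))^2 - 1/2*(norm(x-xs))^2
      \<le> \<delta>*(a*norm(x'-xs)) + 1/2*a^2*(norm v)^2"
    using ident zero_le_power2[of "norm w"] by (simp only: mult.assoc mult.left_commute[of a \<delta>])
  define d where "d = y' - xt"
  define sd where "sd = norm d"
  define N where "N = norm (lam *\<^sub>R v + d)"
  have N2: "N^2 = lam^2*(norm v)^2 + 2*lam*(v\<bullet>d) + sd^2"
    unfolding N_def sd_def power2_norm_eq_inner
    by (simp add: inner_add_left inner_add_right inner_commute algebra_simps power2_eq_square)
  have Nle: "N \<le> \<sigma> * sd + lam*\<delta>" using e1 unfolding N_def sd_def d_def by (simp add: algebra_simps)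
  have "N^2 \<le> (\<sigma> * sd + lam*\<delta>)^2" using Nle N_def by (intro power_mono) auto
  moreover have "(\<sigma> * sd + lam*\<delta>)^2 - sd^2 \<le> -(1-\<sigma>) * sd^2 + (lam*\<delta>)^2/(1-\<sigma>)"
  proof -
    have "0 \<le> \<sigma>*(lam*\<delta> - (1-\<sigma>) * sd)^2" using sg by simp
    then have "(1-\<sigma>)*((\<sigma> * sd + lam*\<delta>)^2 - sd^2 + (1-\<sigma>) * sd^2) \<le> (lam*\<delta>)^2"
      by (simp add: algebra_simps power2_eq_square)
    then have "(\<sigma> * sd + lam*\<delta>)^2 - sd^2 + (1-\<sigma>) * sd^2 \<le> (lam*\<delta>)^2/(1-\<sigma>)"
      using sg by (simp add: field_simps)
    then show ?thesis by (simp add: left_diff_distrib)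
  qed
  ultimately have key: "lam^2*(norm v)^2 + 2*lam*(v\<bullet>d) \<le> -(1-\<sigma>) * sd^2 + (lam*\<delta>)^2/(1-\<sigma>)"
    using N2 by linarith
  have "A'*(v\<bullet>d) + 1/2*a^2*(norm v)^2 = A'/(2*lam) * (lam^2*(norm v)^2 + 2*lam*(v\<bullet>d))"
    using lam aa unfolding A'_def by (simp add: field_simps power2_eq_square)
  also have "\<dots> \<le> A'/(2*lam) * (-(1-\<sigma>) * sd^2 + (lam*\<delta>)^2/(1-\<sigma>))"
    using key A'p lam by (intro mult_left_mono) auto
  also have "\<dots> = -(1-\<sigma>)*A'/(2*lam) * sd^2 + \<delta>^2/(2*(1-\<sigma>))*a^2"
    using lam aa sg unfolding A'_def by (simp add: field_simps power2_eq_square)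
  finally have h3: "A'*(v\<bullet>d) + 1/2*a^2*(norm v)^2 \<le> -(1-\<sigma>)*A'/(2*lam) * sd^2 + \<delta>^2/(2*(1-\<sigma>))*a^2" .
  show ?thesis using h1 h2 h3 unfolding A'_def[symmetric] sd_def d_def by linarith
qed

lemma a_facts:
  fixes l B :: real
  assumes "0 < l" "0 \<le> B"
  shows "0 < (l + sqrt(l^2 + 4*l*B))/2"
    and "((l + sqrt(l^2+4*l*B))/2)^2 = l*(B + (l + sqrt(l^2+4*l*B))/2)"
proof -
  have D: "0 \<le> l^2 + 4*l*B" using assms by simp
  have s0: "0 \<le> sqrt(l^2 + 4*l*B)" using D by simp
  have "0 < l + sqrt(l^2 + 4*l*B)" using s0 assms(1) by linarith
  then show "0 < (l + sqrt(l^2 + 4*l*B))/2" by simp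
  have ss: "(sqrt(l^2 + 4*l*B))^2 = l^2 + 4*l*B" using D by simp
  show "((l + sqrt(l^2+4*l*B))/2)^2 = l*(B + (l + sqrt(l^2+4*l*B))/2)"
    using ss by (simp add: power2_eq_square field_simps)
qed


theorem mainTheorem12:
  fixes g :: "'a::euclidean_space \<Rightarrow> real" and gradg :: "'a \<Rightarrow> 'a"
    and \<sigma> \<delta> :: real and K :: nat
    and lam :: "nat \<Rightarrow> real" and x y :: "nat \<Rightarrow> 'a" and xs :: 'a
  assumes conv: "convex_on UNIV g"
    and grad: "\<And>z. (g has_derivative (\<lambda>h. gradg z \<bullet> h)) (at z)"
    and sigma: "0 < \<sigma>" "\<sigma> < 1"
    and delta: "0 \<le> \<delta>"
    and K: "1 \<le> K"
    and frame: "accel_framework gradg \<sigma> \<delta> K lam x y"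
    and xs_min: "\<And>z. g xs \<le> g z"
  shows
    "(\<forall>c\<ge>0. \<delta> \<le> c * sqrt (1 - \<sigma>) * norm xs / acc_A lam K \<longrightarrow>
        (\<forall>k\<in>{1..K}. acc_err \<sigma> \<delta> lam x xs k \<le> c * (1 + 3 * c) * (norm xs)\<^sup>2)
      \<and> (c \<le> 1/4 \<longrightarrow>
          (\<forall>k\<in>{1..K}.
             acc_A lam k * (g (y k) - g xs) + 1/2 * (norm (x k - xs))\<^sup>2
             + (\<Sum>i=1..k. (1 - \<sigma>) * acc_A lam i / (2 * lam i)
                            * (norm (y i - acc_xt lam x y (i - 1)))\<^sup>2)
             \<le> (norm xs)\<^sup>2)))
    \<and> (\<delta> \<le> norm xs / ((4 * sqrt 2 / sqrt (1 - \<sigma>)) * acc_A lam K) \<longrightarrow>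
        (\<forall>k\<in>{1..K}. norm (x k - xs) \<le> 2 * norm xs)
      \<and> (\<forall>\<epsilon>>0. \<forall>k\<in>{1..K}. g (y k) \<le> g xs + \<epsilon> \<or> acc_A lam k \<le> (norm xs)\<^sup>2 / \<epsilon>))"
  
proof -
  define A where "A = acc_A lam"
  define a where "a = acc_a lam"
  define r where "r = norm xs"
  define S where "S k = (\<Sum>i=1..k. (1 - \<sigma>) * acc_A lam i / (2 * lam i)
                            * (norm (y i - acc_xt lam x y (i - 1)))\<^sup>2)" for k
  define E where "E k = acc_err \<sigma> \<delta> lam x xs k" for k
  have x0: "x 0 = 0" using frame unfolding accel_framework_def by auto
  have lampos: "\<And>k. 1 \<le> k \<Longrightarrow> k \<le> K \<Longrightarrow> 0 < lam k"
    using frame unfolding accel_framework_def by auto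
  have fr: "\<And>k. k < K \<Longrightarrow>
        norm (lam (Suc k) *\<^sub>R gradg (y (Suc k)) + y (Suc k) - acc_xt lam x y k)
          \<le> \<sigma> * norm (y (Suc k) - acc_xt lam x y k) + lam (Suc k) * \<delta>
      \<and> norm (x (Suc k) - (x k - acc_a lam (Suc k) *\<^sub>R gradg (y (Suc k))))
          \<le> acc_a lam (Suc k) * \<delta>"
    using frame unfolding accel_framework_def by auto
  have aSuc: "\<And>k. a (Suc k) = (lam (Suc k) + sqrt((lam (Suc k))^2 + 4*lam (Suc k)*A k))/2"
    unfolding a_def A_def acc_a_def by simp
  have Asuc: "\<And>k. A (Suc k) = A k + a (Suc k)" unfolding A_def a_def acc_a_def by simp
  have Anonneg: "k \<le> K \<Longrightarrow> 0 \<le> A k" for k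
  proof (induction k)
    case 0 show ?case by (simp add: A_def)
  next
    case (Suc k)
    then have "0 \<le> A k" "0 < lam (Suc k)" using lampos by auto
    then show ?case unfolding Asuc aSuc using a_facts(1)[of "lam (Suc k)" "A k"] by simp
  qed
  have afacts: "0 < a (Suc k) \<and> (a (Suc k))^2 = lam (Suc k) * (A k + a (Suc k))" if "Suc k \<le> K" for k
    using a_facts[of "lam (Suc k)" "A k"] Anonneg[of k] lampos[of "Suc k"] that unfolding aSuc by simp
  have apos: "0 \<le> a i" if i1: "1 \<le> i" and iK: "i \<le> K" for i
  proof -
    obtain j where "i = Suc j" using i1 by (cases i) auto
    then show ?thesis using afacts[of j] iK by simp
  qed
  have Amono: "A i \<le> A k" if "i \<le> k" "k \<le> K" for i k
    using that
  proof (induction k)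
    case 0 then show ?case by simp
  next
    case (Suc k)
    show ?case
    proof (cases "i = Suc k")
      case False
      then have "A i \<le> A k" using Suc by simp
      moreover have "0 \<le> a (Suc k)" using apos[of "Suc k"] Suc by simp
      ultimately show ?thesis unfolding Asuc by simp
    qed simp
  qed
  have sumA: "(\<Sum>i=1..k. a i) = A k" for k
  proof (induction k)
    case 0 then show ?case by (simp add: A_def)
  next
    case (Suc k) then show ?case by (simp add: Asuc)
  qed
  have lyap: "A k*(g(y k) - g xs) + 1/2*(norm(x k - xs))^2 + S k \<le> 1/2*r^2 + E k" if "k \<le> K" for k
    using that
  proof (induction k)
    case 0 then show ?case by (simp add: A_def S_def E_def acc_err_def r_def x0)
  next
    case (Suc k)
    then have kK: "k < K" by simp
    have IH: "A k*(g(y k) - g xs) + 1/2*(norm(x k - xs))^2 + S k \<le> 1/2*r^2 + E k"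
      using Suc by simp
    define l where "l = lam (Suc k)"
    define av where "av = a (Suc k)"
    define v where "v = gradg (y (Suc k))"
    define xt where "xt = acc_xt lam x y k"
    have av: "0 < av" "av^2 = l * (A k + av)" using afacts[OF Suc.prems] unfolding av_def l_def by auto
    have l: "0 < l" using lampos[of "Suc k"] Suc.prems unfolding l_def by simp
    have xt: "xt = (A k/(A k + av)) *\<^sub>R y k + (av/(A k + av)) *\<^sub>R x k"
      proof -
      have "acc_A lam (Suc k) = acc_A lam k + acc_a lam (Suc k)" using Asuc unfolding A_def a_def by simp
      then show ?thesis unfolding xt_def acc_xt_def av_def A_def a_def by (simp only:)
    qed
    have c1: "g (y k) \<ge> g (y (Suc k)) + v \<bullet> (y k - y (Suc k))"
      unfolding v_def by (rule tangent[OF conv grad])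
    have c2: "g xs \<ge> g (y (Suc k)) + v \<bullet> (xs - y (Suc k))"
      unfolding v_def by (rule tangent[OF conv grad])
    have e1: "norm (l *\<^sub>R v + y (Suc k) - xt) \<le> \<sigma> * norm (y (Suc k) - xt) + l*\<delta>"
      using fr[OF kK] unfolding l_def v_def xt_def by simp
    have e2: "norm (x (Suc k) - (x k - av *\<^sub>R v)) \<le> av*\<delta>"
      using fr[OF kK] unfolding av_def v_def a_def by simp
    have st: "(A k+av)*(g (y (Suc k)) - g xs) + 1/2*(norm (x (Suc k)-xs))^2
        + (1-\<sigma>)*(A k+av)/(2*l)*(norm(y (Suc k)-xt))^2
     \<le> A k*(g (y k) - g xs) + 1/2*(norm(x k-xs))^2 + \<delta>*(av*norm(x (Suc k)-xs))
        + \<delta>^2/(2*(1-\<sigma>))*av^2"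
      by (rule step[OF Anonneg[of k] l av(1) av(2) sigma delta xt c1 c2 e1 e2]) (use kK in simp)
    have SS: "S (Suc k) = S k + (1-\<sigma>)*A (Suc k)/(2*l)*(norm(y (Suc k)-xt))^2"
      unfolding S_def xt_def l_def A_def by simp
    have EE: "E (Suc k) = E k + \<delta>*(av*norm(x (Suc k)-xs)) + \<delta>^2/(2*(1-\<sigma>))*av^2"
      unfolding E_def acc_err_def av_def a_def by (simp add: distrib_left)
    show ?case using IH st SS EE unfolding Asuc av_def[symmetric] by linarith
  qed

  have Snonneg: "0 \<le> S k" if "k \<le> K" for k
    unfolding S_def
  proof (rule sum_nonneg)
    fix i assume i: "i \<in> {1..k}"
    then have "0 \<le> acc_A lam i" "0 < lam i" using Anonneg[of i] lampos[of i] that unfolding A_def by auto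
    then show "0 \<le> (1 - \<sigma>) * acc_A lam i / (2 * lam i) * (norm (y i - acc_xt lam x y (i - 1)))\<^sup>2"
      using sigma by simp
  qed
  have gnonneg: "0 \<le> A k * (g (y k) - g xs)" if "k \<le> K" for k
    using Anonneg[OF that] xs_min[of "y k"] by simp
  have A1: "0 < A 1" using afacts[of 0] K Asuc[of 0] by (simp add: A_def)
  have AKpos: "0 < A K" using A1 Amono[of 1 K] K by simp
  have sq1: "sqrt (1 - \<sigma>) \<le> 1" "0 < sqrt (1 - \<sigma>)" using sigma by auto
  have r0: "0 \<le> r" unfolding r_def by simp
  have P1: "\<forall>k\<in>{1..K}. E k \<le> c*(1+3*c)*r^2"
    if hd: "\<delta> \<le> c * sqrt (1 - \<sigma>) * norm xs / acc_A lam K" and c0: "0 \<le> c" for c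
  proof -
    define B where "B = \<delta> * A K"
    have B0: "0 \<le> B" unfolding B_def using delta AKpos by simp
    have Bc: "B \<le> c * sqrt(1-\<sigma>) * r"
      using hd AKpos unfolding B_def r_def A_def by (simp add: pos_le_divide_eq)
    have "c * sqrt(1-\<sigma>) * r \<le> c * 1 * r"
      using sq1 c0 r0 by (intro mult_right_mono mult_left_mono) auto
    then have Bcr: "B \<le> c*r" using Bc by simp
    have "B^2 \<le> (c * sqrt(1-\<sigma>) * r)^2" using Bc B0 by (intro power_mono) auto
    also have "\<dots> = c^2*(1-\<sigma>)*r^2" using sigma by (simp add: power_mult_distrib)
    finally have "B^2/(2*(1-\<sigma>)) \<le> c^2*(1-\<sigma>)*r^2/(2*(1-\<sigma>))"
      using sigma by (intro divide_right_mono) auto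
    moreover have "c^2*(1-\<sigma>)*r^2/(2*(1-\<sigma>)) = c^2*r^2/2" using sigma by (simp add: field_simps)
    ultimately have B2: "B^2/(2*(1-\<sigma>)) \<le> c^2*r^2/2" by linarith
    define M where "M = Max ((\<lambda>i. norm (x i - xs)) ` {1..K})"
    have Mge: "norm (x i - xs) \<le> M" if "i \<in> {1..K}" for i
      unfolding M_def using that by (intro Max_ge) auto
    obtain i0 where i0: "i0 \<in> {1..K}" "M = norm (x i0 - xs)"
    proof -
      have "M \<in> (\<lambda>i. norm (x i - xs)) ` {1..K}" unfolding M_def using K by (intro Max_in) auto
      then show ?thesis using that by blast
    qed
    have M0: "0 \<le> M" using i0 by simp
    have aleAK: "a i \<le> A K" if iK: "i \<in> {1..K}" for i
    proof -
      obtain j where j: "i = Suc j" using iK by (cases i) auto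
      have "a i \<le> A i" using j Asuc[of j] Anonneg[of j] iK by simp
      also have "\<dots> \<le> A K" using Amono[of i K] iK by simp
      finally show ?thesis .
    qed
    have Ebound: "E k \<le> B*M + B^2/(2*(1-\<sigma>))" if k: "k \<in> {1..K}" for k
    proof -
      have s1: "(\<Sum>i=1..k. a i * norm (x i - xs)) \<le> (\<Sum>i=1..k. a i * M)"
        using k by (intro sum_mono mult_left_mono Mge apos) auto
      have s1': "(\<Sum>i=1..k. a i * M) = A k * M" using sumA[of k] by (simp add: sum_distrib_right[symmetric])
      have "A k * M \<le> A K * M" using Amono[of k K] k M0 by (intro mult_right_mono) auto
      then have t1: "\<delta> * (\<Sum>i=1..k. a i * norm (x i - xs)) \<le> \<delta> * (A K * M)"
        using s1 s1' delta by (intro mult_left_mono) auto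
      have s2: "(\<Sum>i=1..k. (a i)^2) \<le> (\<Sum>i=1..k. a i * A K)"
        using k by (intro sum_mono) (auto simp: power2_eq_square intro!: mult_left_mono aleAK apos)
      have s2': "(\<Sum>i=1..k. a i * A K) = A k * A K" using sumA[of k] by (simp add: sum_distrib_right[symmetric])
      have "A k * A K \<le> A K * A K" using Amono[of k K] k AKpos by (intro mult_right_mono) auto
      then have t2: "\<delta>^2/(2*(1-\<sigma>)) * (\<Sum>i=1..k. (a i)^2) \<le> \<delta>^2/(2*(1-\<sigma>)) * (A K * A K)"
        using s2 s2' sigma by (intro mult_left_mono) auto
      have "E k = \<delta> * (\<Sum>i=1..k. a i * norm (x i - xs)) + \<delta>^2/(2*(1-\<sigma>)) * (\<Sum>i=1..k. (a i)^2)"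
        unfolding E_def acc_err_def a_def by simp
      also have "\<dots> \<le> \<delta> * (A K * M) + \<delta>^2/(2*(1-\<sigma>)) * (A K * A K)" using t1 t2 by linarith
      also have "\<dots> = B*M + B^2/(2*(1-\<sigma>))" unfolding B_def by (simp add: power2_eq_square)
      finally show ?thesis .
    qed
    have "M^2 \<le> r^2 + 2*E i0"
      using lyap[of i0] i0 Snonneg[of i0] gnonneg[of i0] by simp
    also have "\<dots> \<le> r^2 + 2*(B*M + B^2/(2*(1-\<sigma>)))" using Ebound[OF i0(1)] by simp
    also have "\<dots> \<le> r^2 + 2*(c*r*M + c^2*r^2/2)"
      using mult_right_mono[OF Bcr M0] B2 by (intro add_left_mono mult_left_mono add_mono) auto
    finally have Mq: "M*M - 2*c*r*M \<le> (1 + c^2)*r^2" by (simp add: power2_eq_square algebra_simps)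
    have Mle: "M \<le> (1 + 5/2*c)*r"
    proof (rule ccontr)
      assume "\<not> ?thesis"
      then have h: "(1 + 5/2*c)*r < M" by simp
      have "(1 + 5/2*c)*r * ((1 + 5/2*c)*r - 2*c*r) < M * (M - 2*c*r)"
      proof -
        have t0: "0 \<le> (1 + 5/2*c)*r" using c0 r0 by simp
        have h2: "(1 + 5/2*c)*r - 2*c*r < M - 2*c*r" using h by simp
        have "(1 + 5/2*c)*r - 2*c*r = (1 + 1/2*c)*r" by (simp add: algebra_simps)
        then have t1: "0 \<le> (1 + 5/2*c)*r - 2*c*r" using c0 r0 by simp
        show ?thesis using mult_strict_mono[OF h h2 _ t1] t0 h by linarith
      qed
      moreover have "(1 + 5/2*c)*r * ((1 + 5/2*c)*r - 2*c*r) = (1 + 3*c + 5/4*c^2)*r^2"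
        by (simp add: power2_eq_square field_simps)
      moreover have "(1 + c^2)*r^2 \<le> (1 + 3*c + 5/4*c^2)*r^2"
      proof -
        have "1 + c^2 \<le> 1 + 3*c + 5/4*c^2" using c0 zero_le_power2[of c] by linarith
        then show ?thesis by (rule mult_right_mono) simp
      qed
      moreover have "M*(M-2*c*r) = M*M - 2*c*r*M" by (simp add: algebra_simps)
      ultimately show False using Mq by (simp only: power2_eq_square)
    qed
    show ?thesis
    proof
      fix k assume k: "k \<in> {1..K}"
      have "E k \<le> B*M + B^2/(2*(1-\<sigma>))" by (rule Ebound[OF k])
      also have "\<dots> \<le> c*r*M + c^2*r^2/2" using mult_right_mono[OF Bcr M0] B2 by (intro add_mono) auto
      also have "\<dots> \<le> c*r*((1 + 5/2*c)*r) + c^2*r^2/2"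
        using Mle c0 r0 by (simp add: mult_left_mono)
      also have "\<dots> = c*(1+3*c)*r^2" by (simp add: power2_eq_square algebra_simps)
      finally show "E k \<le> c*(1+3*c)*r^2" .
    qed
  qed
  have P2: "A k*(g(y k) - g xs) + 1/2*(norm(x k - xs))^2 + S k \<le> r^2"
    if hd: "\<delta> \<le> c * sqrt (1 - \<sigma>) * norm xs / acc_A lam K" and c0: "0 \<le> c" and c4: "c \<le> 1/4"
      and k: "k \<in> {1..K}" for c k
  proof -
    have "c*c \<le> c*(1/4)" using c0 c4 by (intro mult_left_mono) auto
    then have "c*(1+3*c) \<le> 1/2" using c4 by (simp add: algebra_simps)
    then have "c*(1+3*c)*r^2 \<le> 1/2*r^2" by (intro mult_right_mono) auto
    then show ?thesis using lyap[of k] P1[OF hd c0] k by fastforce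
  qed
  define c0 where "c0 = 1 / (4 * sqrt 2)"
  have c0p: "0 \<le> c0" "c0 \<le> 1/4" unfolding c0_def by (auto simp: field_simps)
  have P3: "\<delta> \<le> c0 * sqrt (1 - \<sigma>) * norm xs / acc_A lam K"
    if hd: "\<delta> \<le> norm xs / ((4 * sqrt 2 / sqrt (1 - \<sigma>)) * acc_A lam K)"
  proof -
    have "norm xs / ((4 * sqrt 2 / sqrt (1 - \<sigma>)) * acc_A lam K) = c0 * sqrt (1 - \<sigma>) * norm xs / acc_A lam K"
      unfolding c0_def using sq1 AKpos unfolding A_def by (simp add: field_simps)
    then show ?thesis using hd by simp
  qed
  have P4: "(\<forall>k\<in>{1..K}. norm (x k - xs) \<le> 2 * norm xs)
      \<and> (\<forall>\<epsilon>>0. \<forall>k\<in>{1..K}. g (y k) \<le> g xs + \<epsilon> \<or> A k \<le> (norm xs)\<^sup>2 / \<epsilon>)"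
    if hd: "\<delta> \<le> norm xs / ((4 * sqrt 2 / sqrt (1 - \<sigma>)) * acc_A lam K)"
  proof (intro conjI allI ballI impI)
    fix k assume k: "k \<in> {1..K}"
    have L: "A k*(g(y k) - g xs) + 1/2*(norm(x k - xs))^2 + S k \<le> r^2"
      using P2[OF P3[OF hd] c0p k] .
    have kK: "k \<le> K" using k by simp
    have "1/2*(norm(x k - xs))^2 \<le> r^2" using L Snonneg[OF kK] gnonneg[OF kK] by linarith
    moreover have "(2*r)^2 = 4*r^2" by (simp add: power2_eq_square)
    ultimately have "(norm(x k - xs))^2 \<le> (2*r)^2" using zero_le_power2[of r] by linarith
    moreover have "0 \<le> 2*r" using r0 by simp
    ultimately have "norm (x k - xs) \<le> 2*r" by (rule power2_le_imp_le)
    then show "norm (x k - xs) \<le> 2 * norm xs" unfolding r_def .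
  next
    fix \<epsilon> :: real and k assume e: "\<epsilon> > 0" and k: "k \<in> {1..K}"
    have L: "A k*(g(y k) - g xs) + 1/2*(norm(x k - xs))^2 + S k \<le> r^2"
      using P2[OF P3[OF hd] c0p k] .
    have kK: "k \<le> K" using k by simp
    have L': "A k*(g(y k) - g xs) \<le> r^2" using L Snonneg[OF kK] zero_le_power2[of "norm(x k - xs)"] by linarith
    show "g (y k) \<le> g xs + \<epsilon> \<or> A k \<le> (norm xs)\<^sup>2 / \<epsilon>"
    proof (cases "g (y k) \<le> g xs + \<epsilon>")
      case False
      then have "A k * \<epsilon> \<le> A k*(g(y k) - g xs)" using Anonneg[of k] k by (intro mult_left_mono) auto
      then have "A k * \<epsilon> \<le> r^2" using L' by simp
      then show ?thesis using e unfolding r_def by (simp add: pos_le_divide_eq)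
    qed simp
  qed
  have F1: "\<forall>c\<ge>0. \<delta> \<le> c * sqrt (1 - \<sigma>) * norm xs / acc_A lam K \<longrightarrow>
        (\<forall>k\<in>{1..K}. acc_err \<sigma> \<delta> lam x xs k \<le> c * (1 + 3 * c) * (norm xs)\<^sup>2)
      \<and> (c \<le> 1/4 \<longrightarrow>
          (\<forall>k\<in>{1..K}.
             acc_A lam k * (g (y k) - g xs) + 1/2 * (norm (x k - xs))\<^sup>2
             + (\<Sum>i=1..k. (1 - \<sigma>) * acc_A lam i / (2 * lam i)
                            * (norm (y i - acc_xt lam x y (i - 1)))\<^sup>2)
             \<le> (norm xs)\<^sup>2))"
  proof (intro allI impI conjI)
    fix c :: real assume c: "0 \<le> c" and hd: "\<delta> \<le> c * sqrt (1 - \<sigma>) * norm xs / acc_A lam K"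
    show "\<forall>k\<in>{1..K}. acc_err \<sigma> \<delta> lam x xs k \<le> c * (1 + 3 * c) * (norm xs)\<^sup>2"
      using P1[OF hd c] unfolding E_def r_def .
    assume c4: "c \<le> 1/4"
    show "\<forall>k\<in>{1..K}.
             acc_A lam k * (g (y k) - g xs) + 1/2 * (norm (x k - xs))\<^sup>2
             + (\<Sum>i=1..k. (1 - \<sigma>) * acc_A lam i / (2 * lam i)
                            * (norm (y i - acc_xt lam x y (i - 1)))\<^sup>2)
             \<le> (norm xs)\<^sup>2"
    proof
      fix k assume k: "k \<in> {1..K}"
      show "acc_A lam k * (g (y k) - g xs) + 1/2 * (norm (x k - xs))\<^sup>2
             + (\<Sum>i=1..k. (1 - \<sigma>) * acc_A lam i / (2 * lam i)
                            * (norm (y i - acc_xt lam x y (i - 1)))\<^sup>2)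
             \<le> (norm xs)\<^sup>2"
        using P2[OF hd c c4 k] unfolding A_def S_def r_def .
    qed
  qed
  have F2: "\<delta> \<le> norm xs / ((4 * sqrt 2 / sqrt (1 - \<sigma>)) * acc_A lam K) \<longrightarrow>
        (\<forall>k\<in>{1..K}. norm (x k - xs) \<le> 2 * norm xs)
      \<and> (\<forall>\<epsilon>>0. \<forall>k\<in>{1..K}. g (y k) \<le> g xs + \<epsilon> \<or> acc_A lam k \<le> (norm xs)\<^sup>2 / \<epsilon>)"
    using P4 unfolding A_def by blast
  show ?thesis using F1 F2 by (rule conjI)
qed

end
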